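(* Let $X$ be a real or complex Banach space, $(A(n))_{n\in\mathbb{N}}$ a sequence in $\mathcal{B}(X)$, and $P:\mathbb{N}\to\mathcal{B}(X)$ a family of projections compatible with the system $x_{n+1}=A(n)x_n$, with complementary family $Q(n)=I-P(n)$. Then the system is $P$-nonuniformly exponentially dichotomic if and only if there exist a constant $d>0$ and a sequence of real numbers $S:\mathbb{N}\to(0,\infty)$ such that \[ \sum_{j=n}^{\infty}e^{d(j-n)}\|\mathcal{A}_P(j,p)x\|+\sum_{k=n}^{m}e^{d(m-k)}\|\mathcal{A}_Q(k,n)x\|\le S(n)\|\mathcal{A}_P(n,p)x\|+S(m)\|\mathcal{A}_Q(m,n)x\| \] for all $(m,n,p)\in T$ and all $x\in X$.
   Context: $\mathbb{N}$ denotes the set of positive integers; $\mathcal{B}(X)$ is the Banach algebra of bounded linear operators on $X$, and $I$ is the identity operator. $\Delta=\{(m,n)\in\mathbb{N}^2: m\ge n\}$ and $T=\{(m,n,p)\in\mathbb{N}^3: m\ge n\ge p\}$. A family of projections is a map $P:\mathbb{N}\to\mathcal{B}(X)$ with $P(n)^2=P(n)$ for all $n$; its complementary family is $Q(n)=I-P(n)$. $P$ is compatible with the system $x_{n+1}=A(n)x_n$ if $A(n+1)P(n)=P(n+1)A(n+1)$ for all $n\in\mathbb{N}$. For $(m,n)\in\Delta$ define $\mathcal{A}_P(m,n)=A(m)\cdots A(n+1)P(n)$ if $m>n$ and $\mathcal{A}_P(n,n)=P(n)$; similarly $\mathcal{A}_Q(m,n)=A(m)\cdots A(n+1)Q(n)$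 if $m>n$ and $\mathcal{A}_Q(n,n)=Q(n)$. The system is $P$-nonuniformly exponentially dichotomic if there exist a constant $\alpha>0$ and a nondecreasing sequence of real numbers $N:\mathbb{N}\to(0,\infty)$ such that $e^{\alpha(m-n)}\big(\|\mathcal{A}_P(m,n)x\|+\|Q(n)x\|\big)\le N(n)\|P(n)x\|+N(m)\|\mathcal{A}_Q(m,n)x\|$ for all $(m,n)\in\Delta$, $x\in X$. *)

theory Defs
  imports "HOL-Analysis.Analysis"
begin

text \<open>Indices range over the positive integers; we use nat with explicit guards n \<ge> 1.
  transA A n k = A(n+k) o ... o A(n+1)  (identity for k = 0).\<close>

fun transA :: "(nat \<Rightarrow> 'a::real_normed_vector \<Rightarrow>\<^sub>L 'a) \<Rightarrow> nat \<Rightarrow> nat \<Rightarrow> 'a \<Rightarrow>\<^sub>L 'a" where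
  "transA A n 0 = id_blinfun"
| "transA A n (Suc k) = A (n + k + 1) o\<^sub>L transA A n k"

definition cocycle :: "(nat \<Rightarrow> 'a::real_normed_vector \<Rightarrow>\<^sub>L 'a) \<Rightarrow> nat \<Rightarrow> nat \<Rightarrow> 'a \<Rightarrow>\<^sub>L 'a" where
  "cocycle A m n = transA A n (m - n)"

definition compl_proj :: "(nat \<Rightarrow> 'a::real_normed_vector \<Rightarrow>\<^sub>L 'a) \<Rightarrow> nat \<Rightarrow> 'a \<Rightarrow>\<^sub>L 'a" where
  "compl_proj P n = id_blinfun - P n"

definition calA_P :: "(nat \<Rightarrow> 'a::real_normed_vector \<Rightarrow>\<^sub>L 'a) \<Rightarrow> (nat \<Rightarrow> 'a \<Rightarrow>\<^sub>L 'a) \<Rightarrow> nat \<Rightarrow> nat \<Rightarrow> 'a \<Rightarrow>\<^sub>L 'a" where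
  "calA_P A P m n = cocycle A m n o\<^sub>L P n"

definition calA_Q :: "(nat \<Rightarrow> 'a::real_normed_vector \<Rightarrow>\<^sub>L 'a) \<Rightarrow> (nat \<Rightarrow> 'a \<Rightarrow>\<^sub>L 'a) \<Rightarrow> nat \<Rightarrow> nat \<Rightarrow> 'a \<Rightarrow>\<^sub>L 'a" where
  "calA_Q A P m n = cocycle A m n o\<^sub>L compl_proj P n"

definition is_projection_family :: "(nat \<Rightarrow> 'a::real_normed_vector \<Rightarrow>\<^sub>L 'a) \<Rightarrow> bool" where
  "is_projection_family P \<longleftrightarrow> (\<forall>n\<ge>1. P n o\<^sub>L P n = P n)"

definition compatible :: "(nat \<Rightarrow> 'a::real_normed_vector \<Rightarrow>\<^sub>L 'a) \<Rightarrow> (nat \<Rightarrow> 'a \<Rightarrow>\<^sub>L 'a) \<Rightarrow> bool" where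
  "compatible A P \<longleftrightarrow> (\<forall>n\<ge>1. A (n + 1) o\<^sub>L P n = P (n + 1) o\<^sub>L A (n + 1))"

definition P_nonuniform_exp_dichotomic ::
  "(nat \<Rightarrow> 'a::real_normed_vector \<Rightarrow>\<^sub>L 'a) \<Rightarrow> (nat \<Rightarrow> 'a \<Rightarrow>\<^sub>L 'a) \<Rightarrow> bool" where
  "P_nonuniform_exp_dichotomic A P \<longleftrightarrow>
     (\<exists>\<alpha>::real. \<alpha> > 0 \<and> (\<exists>N::nat \<Rightarrow> real.
        (\<forall>n\<ge>1. N n > 0) \<and> (\<forall>n m. 1 \<le> n \<longrightarrow> n \<le> m \<longrightarrow> N n \<le> N m) \<and>
        (\<forall>m n x. 1 \<le> n \<longrightarrow> n \<le> m \<longrightarrow>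
           exp (\<alpha> * (real m - real n)) * (norm (calA_P A P m n x) + norm (compl_proj P n x))
             \<le> N n * norm (P n x) + N m * norm (calA_Q A P m n x))))"

end

theory Submission
  imports Defs
begin

lemma transA_add: "transA A n (a + b) = transA A (n + a) b o\<^sub>L transA A n a"
proof (induction b)
  case 0 then show ?case by (auto intro: blinfun_eqI)
next
  case (Suc b)
  show ?case by (rule blinfun_eqI) (simp add: Suc add.assoc)
qed

lemma cocycle_comp:
  assumes "n \<le> k" "k \<le> m"
  shows "cocycle A m k (cocycle A k n x) = cocycle A m n x"
proof -
  have "transA A n ((k - n) + (m - k)) = transA A (n + (k - n)) (m - k) o\<^sub>L transA A n (k - n)"
    by (rule transA_add)
  moreover have "(k - n) + (m - k) = m - n" "n + (k - n) = k" using assms by auto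
  ultimately show ?thesis unfolding cocycle_def by simp
qed

lemma cocycle_same[simp]: "cocycle A n n x = x"
  unfolding cocycle_def by simp

lemma transA_comm:
  assumes "compatible A P" "n \<ge> 1"
  shows "P (n + k) (transA A n k x) = transA A n k (P n x)"
proof (induction k)
  case 0 then show ?case by simp
next
  case (Suc k)
  have c: "A (n + k + 1) o\<^sub>L P (n + k) = P (n + k + 1) o\<^sub>L A (n + k + 1)"
    using assms unfolding compatible_def by auto
  have "P (n + Suc k) (transA A n (Suc k) x) = P (n + k + 1) (A (n + k + 1) (transA A n k x))"
    by simp
  also have "\<dots> = A (n + k + 1) (P (n + k) (transA A n k x))"
    using arg_cong[OF c, of "\<lambda>f. blinfun_apply f (transA A n k x)"] by simp
  also have "\<dots> = transA A n (Suc k) (P n x)" using Suc by simp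
  finally show ?case .
qed

lemma cocycle_comm:
  assumes "compatible A P" "1 \<le> n" "n \<le> m"
  shows "P m (cocycle A m n x) = cocycle A m n (P n x)"
proof -
  have "n + (m - n) = m" using assms by auto
  then show ?thesis using transA_comm[OF assms(1,2), of "m - n" x] unfolding cocycle_def by simp
qed

lemma proj_idem:
  assumes "is_projection_family P" "1 \<le> n"
  shows "P n (P n x) = P n x"
proof -
  have "P n o\<^sub>L P n = P n" using assms unfolding is_projection_family_def by auto
  from arg_cong[OF this, of "\<lambda>f. blinfun_apply f x"] show ?thesis by simp
qed

lemma compl_apply: "compl_proj P n x = x - P n x"
  unfolding compl_proj_def by (simp add: blinfun.diff_left)

theorem mainTheorem1:
  fixes A P :: "nat \<Rightarrow> 'a::banach \<Rightarrow>\<^sub>L 'a"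
  assumes "is_projection_family P"
    and "compatible A P"
  shows "P_nonuniform_exp_dichotomic A P \<longleftrightarrow>
    (\<exists>d::real. d > 0 \<and> (\<exists>S::nat \<Rightarrow> real. (\<forall>n\<ge>1. S n > 0) \<and>
      (\<forall>m n p x. 1 \<le> p \<longrightarrow> p \<le> n \<longrightarrow> n \<le> m \<longrightarrow>
         summable (\<lambda>i. exp (d * real i) * norm (calA_P A P (n + i) p x)) \<and>
         (\<Sum>i. exp (d * real i) * norm (calA_P A P (n + i) p x))
           + (\<Sum>k=n..m. exp (d * (real m - real k)) * norm (calA_Q A P k n x))
         \<le> S n * norm (calA_P A P n p x) + S m * norm (calA_Q A P m n x))))"
proof
  assume "P_nonuniform_exp_dichotomic A P"
  then obtain \<alpha> N where apos: "\<alpha> > 0" and Npos: "\<forall>n\<ge>1. N n > (0::real)"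
    and Nmono: "\<forall>n m. 1 \<le> n \<longrightarrow> n \<le> m \<longrightarrow> N n \<le> N m"
    and D: "\<And>m n x. 1 \<le> n \<Longrightarrow> n \<le> m \<Longrightarrow>
           exp (\<alpha> * (real m - real n)) * (norm (calA_P A P m n x) + norm (compl_proj P n x))
             \<le> N n * norm (P n x) + N m * norm (calA_Q A P m n x)"
    unfolding P_nonuniform_exp_dichotomic_def by blast
  define d where "d = \<alpha> / 2"
  define q where "q = exp (- d)"
  have dpos: "d > 0" using apos by (simp add: d_def)
  have q0: "0 < q" and q1: "q < 1" using dpos by (auto simp: q_def)
  define S where "S n = N n / (1 - q)" for n
  have geo: "summable (\<lambda>i. q ^ i)" "(\<Sum>i. q ^ i) = 1 / (1 - q)"
    using q0 q1 by (auto intro: summable_geometric simp: suminf_geometric)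
  have expd: "exp (d * t) = exp (\<alpha> * t) * q powr t" for t
    by (simp add: q_def d_def powr_def exp_add[symmetric] algebra_simps)
  show "\<exists>d::real. d > 0 \<and> (\<exists>S::nat \<Rightarrow> real. (\<forall>n\<ge>1. S n > 0) \<and>
      (\<forall>m n p x. 1 \<le> p \<longrightarrow> p \<le> n \<longrightarrow> n \<le> m \<longrightarrow>
         summable (\<lambda>i. exp (d * real i) * norm (calA_P A P (n + i) p x)) \<and>
         (\<Sum>i. exp (d * real i) * norm (calA_P A P (n + i) p x))
           + (\<Sum>k=n..m. exp (d * (real m - real k)) * norm (calA_Q A P k n x))
         \<le> S n * norm (calA_P A P n p x) + S m * norm (calA_Q A P m n x)))"
  proof (intro exI conjI allI impI)
    show "d > 0" by (rule dpos)
    show "S n > 0" if "n \<ge> 1" for n using Npos that q1 by (simp add: S_def)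
    fix m n p :: nat and x :: 'a
    assume p1: "1 \<le> p" and pn: "p \<le> n" and nm: "n \<le> m"
    define y where "y = calA_P A P n p x"
    have Py: "P n y = y"
      unfolding y_def calA_P_def using cocycle_comm[OF assms(2) p1 pn] proj_idem[OF assms(1) p1]
      by simp
    have bound1: "exp (d * real i) * norm (calA_P A P (n + i) p x) \<le> N n * norm y * q ^ i" for i
    proof -
      have "exp (\<alpha> * (real (n+i) - real n)) * (norm (calA_P A P (n+i) n y) + norm (compl_proj P n y))
             \<le> N n * norm (P n y) + N (n+i) * norm (calA_Q A P (n+i) n y)"
        using D[of n "n+i" y] p1 pn by simp
      moreover have "compl_proj P n y = 0" by (simp add: compl_apply Py)
      moreover have "calA_Q A P (n+i) n y = 0" by (simp add: calA_Q_def compl_apply Py)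
      moreover have "calA_P A P (n+i) n y = calA_P A P (n+i) p x"
        using Py cocycle_comp[of p n "n+i" A "P p x"] pn by (simp add: calA_P_def y_def)
      ultimately have h: "exp (\<alpha> * real i) * norm (calA_P A P (n+i) p x) \<le> N n * norm y"
        using Py by simp
      have "exp (d * real i) * norm (calA_P A P (n + i) p x)
          = q ^ i * (exp (\<alpha> * real i) * norm (calA_P A P (n+i) p x))"
        using expd[of "real i"] q0 by (simp add: powr_realpow)
      also have "\<dots> \<le> q ^ i * (N n * norm y)" using h q0 by (intro mult_left_mono) auto
      finally show ?thesis by (simp add: mult_ac)
    qed
    have Nn0: "N n \<ge> 0" using Npos p1 pn by (metis less_imp_le order_trans)
    have sm2: "summable (\<lambda>i. N n * norm y * q ^ i)" using geo(1) by (rule summable_mult)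
    show summ: "summable (\<lambda>i. exp (d * real i) * norm (calA_P A P (n + i) p x))"
      by (rule summable_comparison_test[OF _ sm2]) (use bound1 in auto)
    have s1: "(\<Sum>i. exp (d * real i) * norm (calA_P A P (n + i) p x)) \<le> S n * norm y"
    proof -
      have "(\<Sum>i. exp (d * real i) * norm (calA_P A P (n + i) p x)) \<le> (\<Sum>i. N n * norm y * q ^ i)"
        by (rule suminf_le[OF bound1 summ sm2])
      also have "\<dots> = N n * norm y * (1 / (1 - q))" using suminf_mult[OF geo(1)] geo(2) by simp
      finally show ?thesis by (simp add: S_def)
    qed
    define w where "w = calA_Q A P m n x"
    have bound2: "exp (d * (real m - real k)) * norm (calA_Q A P k n x) \<le> N m * norm w * q ^ (m - k)"
      if k: "k \<in> {n..m}" for k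
    proof -
      define z where "z = calA_Q A P k n x"
      have k1: "1 \<le> k" and nk: "n \<le> k" and km: "k \<le> m" using k p1 pn by auto
      have n1: "1 \<le> n" using p1 pn by simp
      have Pz: "P k z = 0"
        unfolding z_def calA_Q_def using cocycle_comm[OF assms(2) n1 nk] proj_idem[OF assms(1) n1]
        by (simp add: compl_apply blinfun.diff_right)
      have "exp (\<alpha> * (real m - real k)) * (norm (calA_P A P m k z) + norm (compl_proj P k z))
             \<le> N k * norm (P k z) + N m * norm (calA_Q A P m k z)"
        using D[OF k1 km] .
      moreover have "compl_proj P k z = z" by (simp add: compl_apply Pz)
      moreover have "calA_Q A P m k z = w"
        using Pz cocycle_comp[OF nk km, of A] by (simp add: calA_Q_def compl_apply w_def z_def)
      ultimately have h0: "exp (\<alpha> * (real m - real k)) * (norm (calA_P A P m k z) + norm z) \<le> N m * norm w"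
        using Pz by simp
      have "exp (\<alpha> * (real m - real k)) * norm z \<le> exp (\<alpha> * (real m - real k)) * (norm (calA_P A P m k z) + norm z)"
        by (intro mult_left_mono) auto
      with h0 have h: "exp (\<alpha> * (real m - real k)) * norm z \<le> N m * norm w" by linarith
      have "exp (d * (real m - real k)) * norm z = q ^ (m - k) * (exp (\<alpha> * (real m - real k)) * norm z)"
      proof -
        have r: "real m - real k = real (m - k)" using km by (simp add: of_nat_diff)
        have "q powr (real (m - k)) = q ^ (m - k)" using q0 by (rule powr_realpow)
        then show ?thesis using expd[of "real (m - k)"] unfolding r by (simp only: mult_ac)
      qed
      also have "\<dots> \<le> q ^ (m - k) * (N m * norm w)" using h q0 by (intro mult_left_mono) auto
      finally show ?thesis by (simp add: z_def mult_ac)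
    qed
    have s2: "(\<Sum>k=n..m. exp (d * (real m - real k)) * norm (calA_Q A P k n x)) \<le> S m * norm w"
    proof -
      have "(\<Sum>k=n..m. exp (d * (real m - real k)) * norm (calA_Q A P k n x))
          \<le> (\<Sum>k=n..m. N m * norm w * q ^ (m - k))" by (rule sum_mono) (rule bound2)
      also have "\<dots> = N m * norm w * (\<Sum>k=n..m. q ^ (m - k))" by (simp add: sum_distrib_left)
      also have "\<dots> \<le> N m * norm w * (1 / (1 - q))"
      proof (rule mult_left_mono)
        have "(\<Sum>k=n..m. q ^ (m - k)) = (\<Sum>j\<in>(\<lambda>k. m - k) ` {n..m}. q ^ j)"
          by (rule sum.reindex[symmetric, unfolded comp_def]) (auto simp: inj_on_def)
        also have "\<dots> \<le> (\<Sum>i. q ^ i)"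
          by (rule sum_le_suminf[OF geo(1)]) (use q0 in auto)
        finally show "(\<Sum>k=n..m. q ^ (m - k)) \<le> 1 / (1 - q)" using geo(2) by simp
        have "N m \<ge> 0" using Npos p1 pn nm by (metis less_imp_le order_trans)
        then show "0 \<le> N m * norm w" by simp
      qed
      finally have "(\<Sum>k=n..m. exp (d * (real m - real k)) * norm (calA_Q A P k n x))
          \<le> N m * norm w * (1 / (1 - q))" .
      then show ?thesis by (simp add: S_def)
    qed
    show "(\<Sum>i. exp (d * real i) * norm (calA_P A P (n + i) p x))
           + (\<Sum>k=n..m. exp (d * (real m - real k)) * norm (calA_Q A P k n x))
         \<le> S n * norm (calA_P A P n p x) + S m * norm (calA_Q A P m n x)"
      using s1 s2 by (simp add: y_def w_def)
  qed
next
  assume "\<exists>d::real. d > 0 \<and> (\<exists>S::nat \<Rightarrow> real. (\<forall>n\<ge>1. S n > 0) \<and>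
      (\<forall>m n p x. 1 \<le> p \<longrightarrow> p \<le> n \<longrightarrow> n \<le> m \<longrightarrow>
         summable (\<lambda>i. exp (d * real i) * norm (calA_P A P (n + i) p x)) \<and>
         (\<Sum>i. exp (d * real i) * norm (calA_P A P (n + i) p x))
           + (\<Sum>k=n..m. exp (d * (real m - real k)) * norm (calA_Q A P k n x))
         \<le> S n * norm (calA_P A P n p x) + S m * norm (calA_Q A P m n x)))"
  then obtain d S where dpos: "d > (0::real)" and Spos: "\<forall>n\<ge>1. S n > (0::real)"
    and H: "\<And>m n p x. 1 \<le> p \<Longrightarrow> p \<le> n \<Longrightarrow> n \<le> m \<Longrightarrow>
         summable (\<lambda>i. exp (d * real i) * norm (calA_P A P (n + i) p x)) \<and>
         (\<Sum>i. exp (d * real i) * norm (calA_P A P (n + i) p x))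
           + (\<Sum>k=n..m. exp (d * (real m - real k)) * norm (calA_Q A P k n x))
         \<le> S n * norm (calA_P A P n p x) + S m * norm (calA_Q A P m n x)"
    by blast
  define N where "N n = (\<Sum>k=1..n. S k)" for n
  have SN: "S n \<le> N n" if "1 \<le> n" for n
    unfolding N_def using that Spos by (intro member_le_sum) auto
  show "P_nonuniform_exp_dichotomic A P"
    unfolding P_nonuniform_exp_dichotomic_def
  proof (intro exI conjI allI impI)
    show "d > 0" by (rule dpos)
    show "N n > 0" if "1 \<le> n" for n using SN[OF that] Spos that by force
    show "N n \<le> N m" if "1 \<le> n" "n \<le> m" for n m
      unfolding N_def using that Spos by (intro sum_mono2) auto
    fix m n :: nat and x :: 'a
    assume n1: "1 \<le> n" and nm: "n \<le> m"
    define i where "i = m - n"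
    have mi: "m = n + i" using nm by (simp add: i_def)
    have ri: "real m - real n = real i" using nm by (simp add: i_def of_nat_diff)
    have PP: "P n (P n x) = P n x" by (rule proj_idem[OF assms(1) n1])
    have e1: "exp (d * real i) * norm (calA_P A P m n x) \<le> S n * norm (P n x)"
    proof -
      let ?y = "P n x"
      from H[OF n1 order.refl nm, of ?y] have sm: "summable (\<lambda>j. exp (d * real j) * norm (calA_P A P (n + j) n ?y))"
        and le: "(\<Sum>j. exp (d * real j) * norm (calA_P A P (n + j) n ?y))
           + (\<Sum>k=n..m. exp (d * (real m - real k)) * norm (calA_Q A P k n ?y))
         \<le> S n * norm (calA_P A P n n ?y) + S m * norm (calA_Q A P m n ?y)" by auto
      have a: "calA_P A P j n ?y = calA_P A P j n x" for j by (simp add: calA_P_def PP)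
      have b: "calA_Q A P m n ?y = 0" by (simp add: calA_Q_def compl_apply PP)
      have c: "calA_P A P n n ?y = P n x" by (simp add: calA_P_def PP)
      have "exp (d * real i) * norm (calA_P A P (n + i) n ?y) \<le> (\<Sum>j. exp (d * real j) * norm (calA_P A P (n + j) n ?y))"
        using sum_le_suminf[OF sm, of "{i}"] by simp
      moreover have "0 \<le> (\<Sum>k=n..m. exp (d * (real m - real k)) * norm (calA_Q A P k n ?y))"
        by (intro sum_nonneg) auto
      ultimately show ?thesis using le a b c mi by simp
    qed
    have e2: "exp (d * real i) * norm (compl_proj P n x) \<le> S m * norm (calA_Q A P m n x)"
    proof -
      let ?y = "compl_proj P n x"
      from H[OF n1 order.refl nm, of ?y] have sm: "summable (\<lambda>j. exp (d * real j) * norm (calA_P A P (n + j) n ?y))"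
        and le: "(\<Sum>j. exp (d * real j) * norm (calA_P A P (n + j) n ?y))
           + (\<Sum>k=n..m. exp (d * (real m - real k)) * norm (calA_Q A P k n ?y))
         \<le> S n * norm (calA_P A P n n ?y) + S m * norm (calA_Q A P m n ?y)" by auto
      have PQ: "P n ?y = 0" by (simp add: compl_apply PP blinfun.diff_right)
      have a: "calA_Q A P k n ?y = calA_Q A P k n x" for k by (simp add: calA_Q_def compl_apply PP blinfun.diff_right)
      have c: "calA_P A P n n ?y = 0" by (simp add: calA_P_def PQ)
      have "0 \<le> (\<Sum>j. exp (d * real j) * norm (calA_P A P (n + j) n ?y))"
        by (intro suminf_nonneg sm) auto
      moreover have "exp (d * (real m - real n)) * norm (calA_Q A P n n ?y) \<le> (\<Sum>k=n..m. exp (d * (real m - real k)) * norm (calA_Q A P k n ?y))"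
        using nm by (intro member_le_sum) auto
      moreover have "calA_Q A P n n ?y = ?y" by (simp add: calA_Q_def compl_apply PP blinfun.diff_right)
      ultimately show ?thesis using le a c ri by simp
    qed
    have "exp (d * (real m - real n)) * (norm (calA_P A P m n x) + norm (compl_proj P n x))
        \<le> S n * norm (P n x) + S m * norm (calA_Q A P m n x)"
      using e1 e2 ri by (simp add: distrib_left)
    also have "\<dots> \<le> N n * norm (P n x) + N m * norm (calA_Q A P m n x)"
      using SN n1 nm by (intro add_mono mult_right_mono) auto
    finally show "exp (d * (real m - real n)) * (norm (calA_P A P m n x) + norm (compl_proj P n x))
        \<le> N n * norm (P n x) + N m * norm (calA_Q A P m n x)" .
  qed
qed

end
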